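(* Let $S$ be an idempotent $\omega$-continuous semiring, $\mathcal X$ a finite set of variables, and $\vec x=\vec p=\vec f\oplus\vec a$ a system of polynomial equations, where $\vec a\in S^{\mathcal X}$ is the vector of constant parts and $\vec f=(f_x)_{x\in\mathcal X}$ consists of polynomials in which every monomial contains at least one variable. Let $\mu\vec p$ be the least solution of $\vec x=\vec p$. Let $M^{(0)}=\widehat{\vec f}$, $M^{(n+1)}=\mathrm{eval}_{M^{(n)}}(M^{(n)})$, and for $\vec b\in S^{\mathcal X}$ let $M^{(n)}_{\vec b}=\mathrm{eval}_{\vec b}(M^{(n)})$. Then: (1) for all $n\in\mathbb N$, $M^{(n)}_{\vec a}=N^{(2^n)}$; (2) if $\vec a\le\vec b\le\mu\vec p$, then $\sup_{n\in\mathbb N}M^{(n)}_{\vec b}=\mu\vec p$.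
   Context: Semiring notions: a semiring $(S,\oplus,\odot,0,1)$; natural order $a\le a\oplus b$ (componentwise on vectors); $\omega$-continuous: naturally ordered, chains have suprema, countable sums $\bigoplus_i a_i:=\sup_i(a_0\oplus\dots\oplus a_i)$ commute with $\odot$ on both sides and are invariant under partitioning; idempotent: $a\oplus a=a$. Monomials are words $a_1x_{i_1}\cdots a_lx_{i_l}a_{l+1}$ ($a_j\in S$, $x_{i_j}\in\mathcal X$), polynomials finite sums of monomials, interpreted as functions $S^{\mathcal X}\to S$; functions and vectors of functions form semirings with pointwise operations. $\mathrm{eval}_{\vec v}(g)$ is the composition $g\circ\vec v$ (or the value $g(\vec v)$ if $\vec v$ is a vector of constants), applied componentwise to vectors. A solution is $\vec v\in S^{\mathcal X}$ with $\vec v=\mathrm{eval}_{\vec v}(\vec p)$. Linear completion: a substitution $\{x\mapsto g\}$ applied to a polynomial $h$ yields the set $h\{x\mapsto g\}$ of polynomials obtained by replacing exactly one occurrence of $x$ in $h$ by $g$. Linear polynomial substitutions for $x$ are $\{x\mapsto x\}$ or $\{x\mapsto g\}$ with $g\in f_x\sigma_y$ for some variable $y$ and some linear polynomial substitution $\sigma_y$ for $y$ (mutual induction). $\widehat{\vec f}$ has components $\widehat{f_x}=\bigoplus_{\sigma_x}x\sigma_x$ where $x\{x\mapsto g\}=g$, summing over all linear polynomial substitutions for $x$. Newton iteration: for a polynomial $q$, a variable $y$ and $\vec v\in S^{\mathcal X}$, the differential $D_y q|_{\vec v}$ is defined by: $D_y(\bigoplus_i m_i)|_{\vec v}=\bigoplus_i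 D_y m_i|_{\vec v}$; $D_y(g\odot h)|_{\vec v}=(D_y g|_{\vec v}\odot\mathrm{eval}_{\vec v}(h))\oplus(\mathrm{eval}_{\vec v}(g)\odot D_y h|_{\vec v})$; $D_y q|_{\vec v}=0$ if $q\in S$ or $q$ is a variable other than $y$; $D_y y|_{\vec v}=y$. Further $Dq|_{\vec v}=\bigoplus_{y\in\mathcal X}D_yq|_{\vec v}$, componentwise on vectors, and $D\vec p|_{\vec v}^{*}=\bigoplus_{i\in\mathbb N}(D\vec p|_{\vec v})^i$ with $(D\vec p|_{\vec v})^0=\mathrm{id}$ and $(D\vec p|_{\vec v})^{i+1}=\mathrm{eval}_{(D\vec p|_{\vec v})^i}(D\vec p|_{\vec v})$. The Newton sequence is $N^{(0)}=\mathrm{eval}_{\vec 0}(\vec p)$, $N^{(n+1)}=\mathrm{eval}_{N^{(n)}}\big(D\vec p|_{N^{(n)}}^{*}\big)$. *)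

theory Defs
  imports Main
begin

definition nle :: "'a::plus \<Rightarrow> 'a \<Rightarrow> bool" where
  "nle a b \<longleftrightarrow> (\<exists>c. b = a + c)"

definition is_nlub :: "'a::plus \<Rightarrow> 'a set \<Rightarrow> bool" where
  "is_nlub s A \<longleftrightarrow> (\<forall>a\<in>A. nle a s) \<and> (\<forall>t. (\<forall>a\<in>A. nle a t) \<longrightarrow> nle s t)"

definition csum :: "(nat \<Rightarrow> 'a::comm_monoid_add) \<Rightarrow> 'a" where
  "csum f = (THE s. is_nlub s (range (\<lambda>n. sum f {..n})))"

definition idem_omega_semiring :: "'a::{semiring_0,monoid_mult} itself \<Rightarrow> bool" where
  "idem_omega_semiring (_::'a itself) \<longleftrightarrow>
     (\<forall>a b::'a. nle a b \<longrightarrow> nle b a \<longrightarrow> a = b)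
   \<and> (\<forall>f::nat \<Rightarrow> 'a. (\<forall>i. nle (f i) (f (Suc i))) \<longrightarrow> (\<exists>s. is_nlub s (range f)))
   \<and> (\<forall>(c::'a) f. csum (\<lambda>i. c * f i) = c * csum f)
   \<and> (\<forall>(c::'a) f. csum (\<lambda>i. f i * c) = csum f * c)
   \<and> (\<forall>(f::nat \<Rightarrow> 'a) (I::nat \<Rightarrow> nat set).
         (\<forall>j k. j \<noteq> k \<longrightarrow> I j \<inter> I k = {}) \<longrightarrow> (\<Union>j. I j) = UNIV \<longrightarrow>
         csum f = csum (\<lambda>j. csum (\<lambda>n. if n \<in> I j then f n else 0)))
   \<and> (\<forall>a::'a. a + a = a)"

definition ssum :: "('b \<Rightarrow> 'a::comm_monoid_add) \<Rightarrow> 'b set \<Rightarrow> 'a" where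
  "ssum g A = (THE s. is_nlub s {sum g F | F. finite F \<and> F \<subseteq> A})"

definition vle :: "('x \<Rightarrow> 'a::plus) \<Rightarrow> ('x \<Rightarrow> 'a) \<Rightarrow> bool" where
  "vle u v \<longleftrightarrow> (\<forall>x. nle (u x) (v x))"

definition vis_lub :: "('x \<Rightarrow> 'a::plus) \<Rightarrow> ('x \<Rightarrow> 'a) set \<Rightarrow> bool" where
  "vis_lub s A \<longleftrightarrow> (\<forall>u\<in>A. vle u s) \<and> (\<forall>t. (\<forall>u\<in>A. vle u t) \<longrightarrow> vle s t)"

datatype ('a,'x) letter = C 'a | V 'x
type_synonym ('a,'x) mono = "('a,'x) letter list"
type_synonym ('a,'x) poly = "('a,'x) mono list"

fun leval :: "('x \<Rightarrow> 'a) \<Rightarrow> ('a,'x) letter \<Rightarrow> 'a" where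
  "leval v (C a) = a"
| "leval v (V x) = v x"

definition meval :: "('x \<Rightarrow> 'a::monoid_mult) \<Rightarrow> ('a,'x) mono \<Rightarrow> 'a" where
  "meval v m = prod_list (map (leval v) m)"

definition peval :: "('x \<Rightarrow> 'a::{semiring_0,monoid_mult}) \<Rightarrow> ('a,'x) poly \<Rightarrow> 'a" where
  "peval v p = sum_list (map (meval v) p)"

definition sys :: "('x \<Rightarrow> ('a,'x) poly) \<Rightarrow> ('x \<Rightarrow> 'a) \<Rightarrow> 'x \<Rightarrow> ('a,'x) poly" where
  "sys f a x = f x @ [[C (a x)]]"

definition is_solution :: "('x \<Rightarrow> ('a::{semiring_0,monoid_mult},'x) poly) \<Rightarrow> ('x \<Rightarrow> 'a) \<Rightarrow> bool" where
  "is_solution p v \<longleftrightarrow> (\<forall>x. v x = peval v (p x))"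

definition least_solution :: "('x \<Rightarrow> ('a::{semiring_0,monoid_mult},'x) poly) \<Rightarrow> ('x \<Rightarrow> 'a) \<Rightarrow> bool" where
  "least_solution p v \<longleftrightarrow> is_solution p v \<and> (\<forall>w. is_solution p w \<longrightarrow> vle v w)"

text \<open>h{x \<mapsto> g}: replace exactly one occurrence of x in h by g (distributing over the
  monomials of g).\<close>
definition subst :: "('a,'x) poly \<Rightarrow> 'x \<Rightarrow> ('a,'x) poly \<Rightarrow> ('a,'x) poly set" where
  "subst h x g = {take k h @ map (\<lambda>gm. take j (h!k) @ gm @ drop (Suc j) (h!k)) g @ drop (Suc k) h
                   | k j. k < length h \<and> j < length (h!k) \<and> h!k!j = V x}"

inductive lps :: "('x \<Rightarrow> ('a,'x) poly) \<Rightarrow> 'x \<Rightarrow> ('a,'x) poly \<Rightarrow> bool" for f where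
  lps_id: "lps f x [[V x]]"
| lps_step: "lps f y s \<Longrightarrow> g \<in> subst (f x) y s \<Longrightarrow> lps f x g"

definition linc :: "('x \<Rightarrow> ('a::{semiring_0,monoid_mult},'x) poly) \<Rightarrow> 'x \<Rightarrow> ('x \<Rightarrow> 'a) \<Rightarrow> 'a" where
  "linc f x = (\<lambda>v. ssum (\<lambda>g. peval v g) {g. lps f x g})"

text \<open>eval_G(F) for vectors of functions: composition.\<close>
definition vcomp :: "('x \<Rightarrow> ('y \<Rightarrow> 'a) \<Rightarrow> 'a) \<Rightarrow> ('y \<Rightarrow> ('z \<Rightarrow> 'a) \<Rightarrow> 'a) \<Rightarrow> 'x \<Rightarrow> ('z \<Rightarrow> 'a) \<Rightarrow> 'a" where
  "vcomp F G = (\<lambda>x v. F x (\<lambda>y. G y v))"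

fun Mseq :: "('x \<Rightarrow> ('a::{semiring_0,monoid_mult},'x) poly) \<Rightarrow> nat \<Rightarrow> 'x \<Rightarrow> ('x \<Rightarrow> 'a) \<Rightarrow> 'a" where
  "Mseq f 0 = linc f"
| "Mseq f (Suc n) = vcomp (Mseq f n) (Mseq f n)"

fun dletter :: "'x \<Rightarrow> ('a,'x) letter \<Rightarrow> ('x \<Rightarrow> 'a::zero) \<Rightarrow> 'a" where
  "dletter y (C a) u = 0"
| "dletter y (V z) u = (if z = y then u y else 0)"

fun dmono :: "'x \<Rightarrow> ('x \<Rightarrow> 'a::{semiring_0,monoid_mult}) \<Rightarrow> ('a,'x) mono \<Rightarrow> ('x \<Rightarrow> 'a) \<Rightarrow> 'a" where
  "dmono y v [] u = 0"
| "dmono y v (l # w) u = dletter y l u * meval v w + leval v l * dmono y v w u"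

definition dpoly :: "'x \<Rightarrow> ('x \<Rightarrow> 'a::{semiring_0,monoid_mult}) \<Rightarrow> ('a,'x) poly \<Rightarrow> ('x \<Rightarrow> 'a) \<Rightarrow> 'a" where
  "dpoly y v p u = sum_list (map (\<lambda>m. dmono y v m u) p)"

definition Dp :: "('x::finite \<Rightarrow> ('a::{semiring_0,monoid_mult},'x) poly) \<Rightarrow> ('x \<Rightarrow> 'a) \<Rightarrow> 'x \<Rightarrow> ('x \<Rightarrow> 'a) \<Rightarrow> 'a" where
  "Dp p v x u = (\<Sum>y\<in>UNIV. dpoly y v (p x) u)"

fun Dpow :: "('x::finite \<Rightarrow> ('a::{semiring_0,monoid_mult},'x) poly) \<Rightarrow> ('x \<Rightarrow> 'a) \<Rightarrow> nat \<Rightarrow> 'x \<Rightarrow> ('x \<Rightarrow> 'a) \<Rightarrow> 'a" where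
  "Dpow p v 0 = (\<lambda>x u. u x)"
| "Dpow p v (Suc i) = vcomp (Dp p v) (Dpow p v i)"

definition Dstar :: "('x::finite \<Rightarrow> ('a::{semiring_0,monoid_mult},'x) poly) \<Rightarrow> ('x \<Rightarrow> 'a) \<Rightarrow> 'x \<Rightarrow> ('x \<Rightarrow> 'a) \<Rightarrow> 'a" where
  "Dstar p v x u = csum (\<lambda>i. Dpow p v i x u)"

fun newton :: "('x::finite \<Rightarrow> ('a::{semiring_0,monoid_mult},'x) poly) \<Rightarrow> nat \<Rightarrow> 'x \<Rightarrow> 'a" where
  "newton p 0 = (\<lambda>x. peval (\<lambda>_. 0) (p x))"
| "newton p (Suc n) = (\<lambda>x. Dstar p (newton p n) x (newton p n))"

end

theory Submission
  imports Defs "HOL-Library.Countable_Set"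
begin


locale ios =
  fixes T :: "'a::{semiring_0,monoid_mult} itself"
  assumes S: "idem_omega_semiring T"
begin

lemma antisym: "nle (a::'a) b \<Longrightarrow> nle b a \<Longrightarrow> a = b"
  using S unfolding idem_omega_semiring_def by (elim conjE) blast
lemma chain_lub: "(\<And>i. nle (f i) (f (Suc i))) \<Longrightarrow> \<exists>s::'a. is_nlub s (range f)"
  using S unfolding idem_omega_semiring_def by (elim conjE) blast
lemma csum_left: "csum (\<lambda>i. c * f i) = (c::'a) * csum f"
  using S unfolding idem_omega_semiring_def by (elim conjE) simp
lemma csum_right: "csum (\<lambda>i. f i * c) = csum f * (c::'a)"
  using S unfolding idem_omega_semiring_def by (elim conjE) simp
lemma idem[simp]: "(a::'a) + a = a"
  using S unfolding idem_omega_semiring_def by (elim conjE) simp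

lemma nle_iff: "nle (a::'a) b \<longleftrightarrow> a + b = b"
proof
  assume "nle a b" then obtain c where "b = a + c" unfolding nle_def by blast
  then show "a + b = b" by (simp add: add.assoc[symmetric])
next
  assume "a + b = b" then show "nle a b" unfolding nle_def by (intro exI[of _ b]) simp
qed

lemma nle_refl[simp]: "nle (a::'a) a" by (simp add: nle_iff)
lemma nle_trans: "nle (a::'a) b \<Longrightarrow> nle b c \<Longrightarrow> nle a c"
  unfolding nle_iff proof -
  assume 1: "a + b = b" and 2: "b + c = c"
  have "a + c = a + (b + c)" using 2 by simp
  also have "\<dots> = (a + b) + c" by (simp add: add.assoc)
  finally show "a + c = c" using 1 2 by simp
qed
lemma nle_zero[simp]: "nle 0 (a::'a)" by (simp add: nle_iff)
lemma nle_add1[simp]: "nle (a::'a) (a + b)" by (simp add: nle_iff add.assoc[symmetric])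
lemma nle_add2[simp]: "nle (b::'a) (a + b)" using nle_add1[of b a] by (simp add: add.commute)
lemma nle_add_iff: "nle ((a::'a) + b) c \<longleftrightarrow> nle a c \<and> nle b c"
proof
  assume h: "nle (a + b) c"
  show "nle a c \<and> nle b c" using nle_trans[OF nle_add1 h] nle_trans[OF nle_add2 h] by simp
next
  assume "nle a c \<and> nle b c"
  then have "a + c = c" "b + c = c" by (simp_all add: nle_iff)
  then have "(a + b) + c = c" by (metis add.assoc)
  then show "nle (a + b) c" by (simp add: nle_iff)
qed
lemma nle_add_mono: "nle (a::'a) b \<Longrightarrow> nle c d \<Longrightarrow> nle (a + c) (b + d)"
  unfolding nle_add_iff using nle_trans[OF _ nle_add1] nle_trans[OF _ nle_add2] by blast
lemma nle_mult_left: "nle (a::'a) b \<Longrightarrow> nle (c * a) (c * b)"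
  unfolding nle_iff by (metis distrib_left)
lemma nle_mult_right: "nle (a::'a) b \<Longrightarrow> nle (a * c) (b * c)"
  unfolding nle_iff by (metis distrib_right)
lemma nle_mult_mono: "nle (a::'a) b \<Longrightarrow> nle c d \<Longrightarrow> nle (a * c) (b * d)"
  using nle_trans[OF nle_mult_right nle_mult_left] by blast

lemma nle_sum_iff: "finite F \<Longrightarrow> nle (sum (g::_\<Rightarrow>'a) F) t \<longleftrightarrow> (\<forall>i\<in>F. nle (g i) t)"
  by (induction F rule: finite_induct) (auto simp: nle_add_iff)
lemma nle_sum_mono: "(\<And>i. i \<in> F \<Longrightarrow> nle (g i) (h i)) \<Longrightarrow> nle (sum (g::_\<Rightarrow>'a) F) (sum h F)"
  by (induction F rule: infinite_finite_induct) (auto intro: nle_add_mono)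
lemma nle_sum_elem: "finite F \<Longrightarrow> i \<in> F \<Longrightarrow> nle (g i) (sum (g::_\<Rightarrow>'a) F)"
  using nle_sum_iff[of F g "sum g F"] by simp
lemma nle_sum_list_iff: "nle (sum_list (xs::'a list)) t \<longleftrightarrow> (\<forall>x\<in>set xs. nle x t)"
  by (induction xs) (auto simp: nle_add_iff)
lemma nle_sum_list_map_mono: "(\<And>x. x \<in> set xs \<Longrightarrow> nle (g x) (h x)) \<Longrightarrow> nle (sum_list (map (g::_\<Rightarrow>'a) xs)) (sum_list (map h xs))"
  by (induction xs) (auto intro: nle_add_mono)

lemma lub_unique: "is_nlub (s::'a) A \<Longrightarrow> is_nlub s' A \<Longrightarrow> s = s'"
  unfolding is_nlub_def by (meson antisym)

lemma csum_lub: "is_nlub (csum (f::nat\<Rightarrow>'a)) (range f)"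
proof -
  let ?P = "\<lambda>n. sum f {..n}"
  have ch: "nle (?P i) (?P (Suc i))" for i by simp
  obtain s where s: "is_nlub s (range ?P)" using chain_lub[of ?P, OF ch] by blast
  have "csum f = s" unfolding csum_def using s lub_unique by blast
  moreover have "is_nlub s (range f)"
  proof -
    have "nle (f i) s" for i
    proof -
      have "nle (f i) (?P i)" by (rule nle_sum_elem) auto
      moreover have "nle (?P i) s" using s unfolding is_nlub_def by auto
      ultimately show ?thesis by (rule nle_trans)
    qed
    moreover have "nle s t" if "\<forall>i. nle (f i) t" for t
      using s that unfolding is_nlub_def by (auto simp: nle_sum_iff)
    ultimately show ?thesis unfolding is_nlub_def by auto
  qed
  ultimately show ?thesis by simp
qed

lemma lub_csum: "is_nlub s (range (f::nat\<Rightarrow>'a)) \<Longrightarrow> s = csum f"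
  using csum_lub lub_unique by blast

lemma lub_mult_left: "is_nlub s (range (f::nat\<Rightarrow>'a)) \<Longrightarrow> is_nlub (c * s) (range (\<lambda>i. c * f i))"
proof -
  assume "is_nlub s (range f)"
  then have e: "s = csum f" by (rule lub_csum)
  have "is_nlub (csum (\<lambda>i. c * f i)) (range (\<lambda>i. c * f i))" by (rule csum_lub)
  then show ?thesis unfolding csum_left e .
qed
lemma lub_mult_right: "is_nlub s (range (f::nat\<Rightarrow>'a)) \<Longrightarrow> is_nlub (s * c) (range (\<lambda>i. f i * c))"
proof -
  assume "is_nlub s (range f)"
  then have e: "s = csum f" by (rule lub_csum)
  have "is_nlub (csum (\<lambda>i. f i * c)) (range (\<lambda>i. f i * c))" by (rule csum_lub)
  then show ?thesis unfolding csum_right e .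
qed

lemma lub_le: "is_nlub s A \<Longrightarrow> (\<And>x. x \<in> A \<Longrightarrow> nle x t) \<Longrightarrow> nle (s::'a) t"
  unfolding is_nlub_def by blast
lemma lub_ge: "is_nlub s A \<Longrightarrow> x \<in> A \<Longrightarrow> nle (x::'a) s"
  unfolding is_nlub_def by blast

lemma csum_le: "(\<And>i. nle (f i) t) \<Longrightarrow> nle (csum (f::nat\<Rightarrow>'a)) t"
  by (rule lub_le[OF csum_lub]) auto
lemma csum_ge: "nle (f i) (csum (f::nat\<Rightarrow>'a))"
  by (rule lub_ge[OF csum_lub]) auto
lemma csum_mono: "(\<And>i. nle (f i) (g i)) \<Longrightarrow> nle (csum (f::nat\<Rightarrow>'a)) (csum g)"
  by (meson csum_ge csum_le nle_trans)

lemma lub_add: "is_nlub s (range (f::nat\<Rightarrow>'a)) \<Longrightarrow> is_nlub r (range g) \<Longrightarrow>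
   is_nlub (s + r) (range (\<lambda>i. f i + g i))"
  unfolding is_nlub_def by (auto simp: nle_add_iff intro: nle_add_mono) (meson nle_add1 nle_add2 nle_trans)+

lemma lub_prod: assumes cf: "\<And>i. nle (f i) (f (Suc i))" and cg: "\<And>i. nle (g i) (g (Suc i))"
  and s: "is_nlub s (range (f::nat\<Rightarrow>'a))" and r: "is_nlub r (range g)"
  shows "is_nlub (s * r) (range (\<lambda>i. f i * g i))"
proof -
  have mf: "nle (f i) (f j)" if "i \<le> j" for i j using that
    by (induction rule: dec_induct) (auto intro: nle_trans cf)
  have mg: "nle (g i) (g j)" if "i \<le> j" for i j using that
    by (induction rule: dec_induct) (auto intro: nle_trans cg)
  have "nle (f i * g i) (s * r)" for i
    by (rule nle_mult_mono; rule lub_ge) (use s r in auto)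
  moreover have "nle (s * r) t" if t: "\<forall>i. nle (f i * g i) t" for t
  proof -
    have "nle (s * g j) t" for j
    proof -
      have "is_nlub (s * g j) (range (\<lambda>i. f i * g j))" using lub_mult_right[OF s] .
      moreover have "nle (f i * g j) t" for i
      proof -
        have "nle (f i * g j) (f (max i j) * g (max i j))"
          by (rule nle_mult_mono; rule mf mg) auto
        then show ?thesis using t nle_trans by blast
      qed
      ultimately show ?thesis using lub_le by blast
    qed
    then show ?thesis using lub_mult_left[OF r, of s] lub_le by blast
  qed
  ultimately show ?thesis unfolding is_nlub_def by auto
qed

lemma ssum_lub: assumes "countable A" "A \<noteq> {}"
  shows "is_nlub (ssum (g::_\<Rightarrow>'a) A) (g ` A)"
proof -
  define e where "e = from_nat_into A"
  have eA: "range e = A" using assms by (simp add: e_def range_from_nat_into)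
  have l: "is_nlub (csum (g \<circ> e)) (g ` A)"
  proof -
    have "range (g \<circ> e) = g ` A" using eA by (metis image_comp)
    then show ?thesis using csum_lub[of "g \<circ> e"] by simp
  qed
  have "is_nlub (csum (g \<circ> e)) {sum g F | F. finite F \<and> F \<subseteq> A}"
    unfolding is_nlub_def
  proof (intro conjI ballI allI impI)
    fix y assume "y \<in> {sum g F | F. finite F \<and> F \<subseteq> A}"
    then obtain F where F: "finite F" "F \<subseteq> A" "y = sum g F" by blast
    show "nle y (csum (g \<circ> e))" unfolding F(3) using F(1,2) l
      by (subst nle_sum_iff) (auto simp: is_nlub_def)
  next
    fix t assume t: "\<forall>y\<in>{sum g F | F. finite F \<and> F \<subseteq> A}. nle y t"
    have "nle (g x) t" if "x \<in> A" for x
    proof -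
      have "sum g {x} \<in> {sum g F | F. finite F \<and> F \<subseteq> A}" using that by blast
      then show ?thesis using t by simp
    qed
    then show "nle (csum (g \<circ> e)) t" using l unfolding is_nlub_def by blast
  qed
  then have "ssum g A = csum (g \<circ> e)" unfolding ssum_def using lub_unique by blast
  then show ?thesis using l by simp
qed

end



context ios begin

lemma meval_Nil[simp]: "meval v [] = 1" by (simp add: meval_def)
lemma meval_Cons[simp]: "meval v (l # w) = leval v l * meval v w" by (simp add: meval_def)
lemma meval_append: "meval v (xs @ ys) = meval v xs * meval v ys"
  by (induction xs) (simp_all add: mult.assoc)
lemma peval_Nil[simp]: "peval v [] = (0::'a)" by (simp add: peval_def)
lemma peval_Cons[simp]: "peval v (m # h) = meval v m + (peval v h::'a)" by (simp add: peval_def)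
lemma peval_append: "peval v (xs @ ys) = peval v xs + (peval v ys::'a)"
  by (induction xs) (simp_all add: add.assoc)

lemma leval_mono: "vle v (w::'x \<Rightarrow> 'a) \<Longrightarrow> nle (leval v l) (leval w l)"
  by (cases l) (auto simp: vle_def)
lemma meval_mono: "vle v (w::'x \<Rightarrow> 'a) \<Longrightarrow> nle (meval v m) (meval w m)"
  by (induction m) (auto intro: nle_mult_mono leval_mono)
lemma peval_mono: "vle v (w::'x \<Rightarrow> 'a) \<Longrightarrow> nle (peval v h) (peval w h)"
  by (induction h) (auto intro: nle_add_mono meval_mono)

lemma meval_zero: "V z \<in> set m \<Longrightarrow> meval (\<lambda>_. 0::'a) m = 0"
  by (induction m) auto

lemma peval_zero: "\<forall>m\<in>set h. \<exists>z. V z \<in> set m \<Longrightarrow> peval (\<lambda>_. 0::'a) h = 0"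
  by (induction h) (auto simp: meval_zero)

lemma sum_dletter: "(\<Sum>y\<in>UNIV. dletter y l (u::'x::finite \<Rightarrow> 'a)) = (case l of C _ \<Rightarrow> 0 | V z \<Rightarrow> u z)"
  by (cases l) (auto simp: sum.delta')

lemma sum_dmono_Cons: "(\<Sum>y\<in>UNIV. dmono y v (l # w) (u::'x::finite \<Rightarrow> 'a))
   = (\<Sum>y\<in>UNIV. dletter y l u) * meval v w + leval v l * (\<Sum>y\<in>UNIV. dmono y v w u)"
  by (simp add: sum.distrib sum_distrib_left sum_distrib_right)

lemma T_le: "nle (\<Sum>y\<in>UNIV. dmono y v m (v::'x::finite \<Rightarrow> 'a)) (meval v m)"
proof (induction m)
  case Nil then show ?case by simp
next
  case (Cons l w)
  show ?case
  proof (cases l)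
    case (C c)
    then show ?thesis unfolding sum_dmono_Cons sum_dletter using Cons by (simp add: nle_mult_left)
  next
    case (V z)
    have "nle (v z * (\<Sum>y\<in>UNIV. dmono y v w v)) (v z * meval v w)"
      using Cons by (rule nle_mult_left)
    then show ?thesis unfolding sum_dmono_Cons sum_dletter using V
      by (simp add: nle_add_iff)
  qed
qed

lemma T_ge: "V z \<in> set m \<Longrightarrow> nle (meval v m) (\<Sum>y\<in>UNIV. dmono y v m (v::'x::finite \<Rightarrow> 'a))"
proof (induction m)
  case Nil then show ?case by simp
next
  case (Cons l w)
  show ?case
  proof (cases l)
    case (C c)
    then have "V z \<in> set w" using Cons by auto
    then show ?thesis unfolding sum_dmono_Cons sum_dletter using Cons C by (simp add: nle_mult_left)
  next
    case (V z')
    then show ?thesis unfolding sum_dmono_Cons sum_dletter by simp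
  qed
qed

lemma sum_UNIV_sum_list: "(\<Sum>y\<in>UNIV. sum_list (map (\<lambda>m. F y m) h)) = sum_list (map (\<lambda>m. \<Sum>y\<in>UNIV. F y m) h)"
  by (induction h) (simp_all add: sum.distrib)

lemma dpoly_sys: "dpoly y v (sys f a x) (u::'x \<Rightarrow> 'a) = dpoly y v (f x) u"
  by (simp add: dpoly_def sys_def)

lemma Dp_sys: "Dp (sys f a) v x (u::'x::finite \<Rightarrow> 'a) = (\<Sum>y\<in>UNIV. dpoly y v (f x) u)"
  by (simp add: Dp_def dpoly_sys)

lemma Dp_sys': "Dp (sys f a) v x (u::'x::finite \<Rightarrow> 'a) = sum_list (map (\<lambda>m. \<Sum>y\<in>UNIV. dmono y v m u) (f x))"
  unfolding Dp_sys dpoly_def by (rule sum_UNIV_sum_list)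

lemma Dp_self_le: "nle (Dp (sys f a) v x (v::'x::finite \<Rightarrow> 'a)) (peval v (f x))"
  unfolding Dp_sys' peval_def by (rule nle_sum_list_map_mono) (rule T_le)

lemma Dp_self_ge: "\<forall>m\<in>set (f x). \<exists>z. V z \<in> set m \<Longrightarrow>
   nle (peval v (f x)) (Dp (sys f a) v x (v::'x::finite \<Rightarrow> 'a))"
  unfolding Dp_sys' peval_def by (rule nle_sum_list_map_mono) (metis T_ge)

lemma peval_sys: "peval v (sys f a x) = peval v (f x) + (a x :: 'a)"
  by (simp add: sys_def peval_append)

lemma dletter_mono: "(\<forall>y. nle (u y) (u' y)) \<Longrightarrow> nle (dletter y l u) (dletter y l (u'::_\<Rightarrow>'a))"
  by (cases l) auto

lemma dmono_mono: "vle v v' \<Longrightarrow> (\<forall>y. nle (u y) (u' y)) \<Longrightarrow>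
   nle (dmono y v m u) (dmono y v' m (u'::_\<Rightarrow>'a))"
  by (induction m) (auto intro!: nle_add_mono nle_mult_mono dletter_mono meval_mono leval_mono)

lemma Dp_mono: "vle v v' \<Longrightarrow> (\<forall>y. nle (u y) (u' y)) \<Longrightarrow>
   nle (Dp p v x u) (Dp p v' x (u'::_\<Rightarrow>'a))"
  unfolding Dp_def dpoly_def
  by (intro nle_sum_mono nle_sum_list_map_mono dmono_mono)

lemma Dpow_mono: "vle v v' \<Longrightarrow> (\<forall>y. nle (u y) (u' y)) \<Longrightarrow>
   nle (Dpow p v i x u) (Dpow p v' i x (u'::_\<Rightarrow>'a))"
proof (induction i arbitrary: x)
  case 0 then show ?case by simp
next
  case (Suc i) then show ?case by (simp add: vcomp_def Dp_mono)
qed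

lemma Dstar_mono: "vle v v' \<Longrightarrow> (\<forall>y. nle (u y) (u' y)) \<Longrightarrow>
   nle (Dstar p v x u) (Dstar p v' x (u'::_\<Rightarrow>'a))"
  unfolding Dstar_def by (intro csum_mono Dpow_mono)

lemma dmono_pos: "j < length m \<Longrightarrow> m ! j = V y \<Longrightarrow>
  nle (c * meval v (take j m) * u y * meval v (drop (Suc j) m)) (c * dmono y v m (u::_\<Rightarrow>'a))"
proof (induction m arbitrary: j c)
  case Nil then show ?case by simp
next
  case (Cons l w)
  show ?case
  proof (cases j)
    case 0
    then show ?thesis using Cons by (simp add: distrib_left mult.assoc)
  next
    case (Suc j')
    then have "nle ((c * leval v l) * meval v (take j' w) * u y * meval v (drop (Suc j') w))
         ((c * leval v l) * dmono y v w u)" using Cons by auto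
    then show ?thesis using Suc nle_trans[OF _ nle_add2] by (simp add: distrib_left mult.assoc)
  qed
qed

lemma dmono_bound: "(\<And>j. j < length m \<Longrightarrow> m ! j = V y \<Longrightarrow>
     nle (c * meval v (take j m) * u y * meval v (drop (Suc j) m)) t) \<Longrightarrow>
  nle (c * dmono y v m (u::_\<Rightarrow>'a)) t"
proof (induction m arbitrary: c)
  case Nil then show ?case by simp
next
  case (Cons l w)
  have 1: "nle (c * (dletter y l u * meval v w)) t"
  proof (cases "l = V y")
    case True
    then show ?thesis using Cons.prems[of 0] by (simp add: mult.assoc)
  next
    case False
    then have "dletter y l u = 0" by (cases l) auto
    then show ?thesis by simp
  qed
  have 2: "nle ((c * leval v l) * dmono y v w u) t"
  proof (rule Cons.IH)
    fix j assume "j < length w" "w ! j = V y"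
    then show "nle (c * leval v l * meval v (take j w) * u y * meval v (drop (Suc j) w)) t"
      using Cons.prems[of "Suc j"] by (simp add: mult.assoc)
  qed
  show ?case using 1 2 by (simp add: distrib_left nle_add_iff mult.assoc)
qed

end



context ios begin

declare nle_trans[trans]

lemma sum_list_sandwich: "sum_list (map (\<lambda>gm. meval v (A @ gm @ B)) s) = meval v A * peval v s * (meval v B :: 'a)"
  by (induction s) (simp_all add: meval_append distrib_left distrib_right mult.assoc)

lemma peval_subst_elem: "peval v (take k h @ map (\<lambda>gm. A @ gm @ B) s @ drop (Suc k) h)
  = peval v (take k h) + meval v A * peval v s * meval v B + (peval v (drop (Suc k) h) :: 'a)"
proof -
  have "peval v (map (\<lambda>gm. A @ gm @ B) s) = meval v A * peval v s * meval v B"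
    unfolding peval_def by (simp add: comp_def sum_list_sandwich[unfolded peval_def])
  then show ?thesis by (simp add: peval_append add.assoc)
qed

lemma rest_le: "k < length h \<Longrightarrow> nle (peval v (take k h) + peval v (drop (Suc k) h)) (peval v h :: 'a)"
proof -
  assume k: "k < length h"
  have "peval v h = peval v (take k h) + (meval v (h ! k) + peval v (drop (Suc k) h))"
    using id_take_nth_drop[OF k] by (metis peval_append peval_Cons)
  then show ?thesis by (simp add: nle_add_mono)
qed

lemma nle_sum_list_elem: "x \<in> set xs \<Longrightarrow> nle x (sum_list (xs::'a list))"
  using nle_sum_list_iff[of xs "sum_list xs"] by simp

lemma dmono_le_Dp: "k < length (f x) \<Longrightarrow>
   nle (dmono y v (f x ! k) u) (Dp (sys f a) v x (u::'x::finite \<Rightarrow> 'a))"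
proof -
  assume k: "k < length (f x)"
  have "nle (dmono y v (f x ! k) u) (dpoly y v (f x) u)"
    unfolding dpoly_def by (rule nle_sum_list_elem) (use k in auto)
  also have "nle (dpoly y v (f x) u) (\<Sum>y\<in>UNIV. dpoly y v (f x) u)"
    by (rule nle_sum_elem) auto
  finally show ?thesis by (simp add: Dp_sys)
qed

lemma Dpow_Suc: "Dpow p v (Suc i) x u = Dp p v x (\<lambda>y. Dpow p v i y (u::_\<Rightarrow>'a))"
  by (simp add: vcomp_def)

lemma Dpow_one: "Dpow p v (Suc 0) x v = Dp p v x (v::_\<Rightarrow>'a)"
  by (simp add: vcomp_def)

lemma Dstar_ge: "nle (Dpow p v i x u) (Dstar p v x (u::_\<Rightarrow>'a))"
  unfolding Dstar_def by (rule csum_ge)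

lemma lps_le_Dstar:
  assumes H: "\<forall>x. \<forall>m \<in> set (f x). \<exists>z. V z \<in> set m"
  shows "lps f x g \<Longrightarrow> nle (peval b g) (Dstar (sys f a) b x (b::'x::finite \<Rightarrow> 'a))"
proof (induction rule: lps.induct)
  case (lps_id x)
  have "peval b [[V x]] = Dpow (sys f a) b 0 x b" by simp
  then show ?case using Dstar_ge by metis
next
  case (lps_step y s g x)
  from lps_step.hyps(2) obtain k j where kj: "k < length (f x)" "j < length (f x ! k)" "f x ! k ! j = V y"
    and g: "g = take k (f x) @ map (\<lambda>gm. take j (f x ! k) @ gm @ drop (Suc j) (f x ! k)) s @ drop (Suc k) (f x)"
    unfolding subst_def by blast
  let ?P = "meval b (take j (f x ! k))" and ?Q = "meval b (drop (Suc j) (f x ! k))"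
  have 1: "nle (peval b (take k (f x)) + peval b (drop (Suc k) (f x))) (Dstar (sys f a) b x b)"
  proof -
    have "nle (peval b (take k (f x)) + peval b (drop (Suc k) (f x))) (peval b (f x))"
      using kj(1) by (rule rest_le)
    also have "nle (peval b (f x)) (Dp (sys f a) b x b)" using H by (simp add: Dp_self_ge)
    also have "Dp (sys f a) b x b = Dpow (sys f a) b (Suc 0) x b" by (simp add: vcomp_def)
    also have "nle \<dots> (Dstar (sys f a) b x b)" by (rule Dstar_ge)
    finally show ?thesis .
  qed
  have 2: "nle (?P * peval b s * ?Q) (Dstar (sys f a) b x b)"
  proof -
    have "nle (?P * peval b s * ?Q) (?P * Dstar (sys f a) b y b * ?Q)"
      using lps_step.IH by (intro nle_mult_right nle_mult_left)
    also have "?P * Dstar (sys f a) b y b * ?Q = csum (\<lambda>i. ?P * Dpow (sys f a) b i y b * ?Q)"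
      unfolding Dstar_def csum_left csum_right ..
    also have "nle \<dots> (Dstar (sys f a) b x b)"
    proof (rule csum_le)
      fix i
      have "nle (1 * ?P * (\<lambda>y. Dpow (sys f a) b i y b) y * ?Q) (1 * dmono y b (f x ! k) (\<lambda>y. Dpow (sys f a) b i y b))"
        using kj(2,3) by (rule dmono_pos)
      also have "nle (1 * dmono y b (f x ! k) (\<lambda>y. Dpow (sys f a) b i y b)) (Dp (sys f a) b x (\<lambda>y. Dpow (sys f a) b i y b))"
        using dmono_le_Dp[of k f x, OF kj(1)] by simp
      also have "Dp (sys f a) b x (\<lambda>y. Dpow (sys f a) b i y b) = Dpow (sys f a) b (Suc i) x b"
        by (simp add: vcomp_def)
      also have "nle \<dots> (Dstar (sys f a) b x b)" by (rule Dstar_ge)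
      finally show "nle (?P * Dpow (sys f a) b i y b * ?Q) (Dstar (sys f a) b x b)" by simp
    qed
    finally show ?thesis .
  qed
  show ?case unfolding g peval_subst_elem using 1 2
    by (simp add: nle_add_iff)
qed

end



context ios begin

declare nle_trans[trans]

definition Alph :: "('x \<Rightarrow> ('b,'x) poly) \<Rightarrow> ('b,'x) letter set" where
  "Alph f = range V \<union> (\<Union>x. \<Union>m\<in>set (f x). set m)"

lemma finite_Alph: "finite (Alph (f::'x::finite \<Rightarrow> ('b,'x) poly))"
  unfolding Alph_def by auto

lemma lps_alph: "lps f x g \<Longrightarrow> \<forall>m\<in>set g. set m \<subseteq> Alph f"
proof (induction rule: lps.induct)
  case (lps_id x) then show ?case by (auto simp: Alph_def)
next
  case (lps_step y s g x)
  from lps_step.hyps(2) obtain k j where kj: "k < length (f x)" "j < length (f x ! k)"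
    and g: "g = take k (f x) @ map (\<lambda>gm. take j (f x ! k) @ gm @ drop (Suc j) (f x ! k)) s @ drop (Suc k) (f x)"
    unfolding subst_def by blast
  have fx: "\<forall>m\<in>set (f x). set m \<subseteq> Alph f" by (auto simp: Alph_def)
  have hk: "set (f x ! k) \<subseteq> Alph f" using fx kj(1) by auto
  show ?case unfolding g
  proof (intro ballI)
    fix m assume "m \<in> set (take k (f x) @ map (\<lambda>gm. take j (f x ! k) @ gm @ drop (Suc j) (f x ! k)) s @ drop (Suc k) (f x))"
    then consider "m \<in> set (take k (f x))" | "m \<in> set (drop (Suc k) (f x))"
      | gm where "gm \<in> set s" "m = take j (f x ! k) @ gm @ drop (Suc j) (f x ! k)" by auto
    then show "set m \<subseteq> Alph f"
    proof cases
      case 1 then show ?thesis using fx by (auto dest: in_set_takeD)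
    next
      case 2 then show ?thesis using fx by (auto dest: in_set_dropD)
    next
      case 3 then show ?thesis using hk lps_step.IH
        by (auto dest: in_set_takeD in_set_dropD)
    qed
  qed
qed

lemma lps_countable: "countable {g. lps (f::'x::finite \<Rightarrow> ('b,'x) poly) x g}"
proof (rule countable_subset)
  show "{g. lps f x g} \<subseteq> lists (lists (Alph f))"
    using lps_alph by (fastforce simp: lists_eq_set)
  show "countable (lists (lists (Alph f)))"
    using finite_Alph[of f] by (intro countable_lists countable_finite) auto
qed

lemma lps_nonempty: "{g. lps f x g} \<noteq> {}"
  using lps_id[of f x] by blast

lemma linc_lub: "is_nlub (linc f x b) (peval b ` {g. lps (f::'x::finite \<Rightarrow> _) x g} :: 'a set)"
  unfolding linc_def by (rule ssum_lub[OF lps_countable lps_nonempty])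

lemma ssum_csum: assumes "countable A" "A \<noteq> {}"
  shows "ssum (g::_\<Rightarrow>'a) A = csum (g \<circ> from_nat_into A) \<and> range (from_nat_into A) = A"
proof -
  have r: "range (from_nat_into A) = A" using assms by (simp add: range_from_nat_into)
  have "g ` A = range (g \<circ> from_nat_into A)" using r by (metis image_comp)
  then have "is_nlub (ssum g A) (range (g \<circ> from_nat_into A))" using ssum_lub[OF assms, of g] by simp
  then have "ssum g A = csum (g \<circ> from_nat_into A)" by (rule lub_csum)
  then show ?thesis using r by simp
qed

lemma Dp_linc_le: "nle (Dp (sys f a) b x (\<lambda>y. linc f y b)) (linc (f::'x::finite \<Rightarrow> _) x (b::'x \<Rightarrow> 'a))"
proof -
  let ?L = "\<lambda>y. linc f y b"
  have "nle (dmono y b (f x ! k) ?L) (?L x)" if k: "k < length (f x)" for y k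
  proof -
    have "nle (1 * dmono y b (f x ! k) ?L) (?L x)"
    proof (rule dmono_bound)
      fix j assume j: "j < length (f x ! k)" "f x ! k ! j = V y"
      let ?P = "meval b (take j (f x ! k))" and ?Q = "meval b (drop (Suc j) (f x ! k))"
      let ?A = "{g. lps f y g}" let ?e = "from_nat_into ?A"
      have eq: "?L y = csum (peval b \<circ> ?e)" and re: "range ?e = ?A"
        using ssum_csum[OF lps_countable lps_nonempty, of "peval b" f y] unfolding linc_def by auto
      have "?P * ?L y * ?Q = csum (\<lambda>n. ?P * peval b (?e n) * ?Q)"
        unfolding eq csum_left csum_right comp_def ..
      also have "nle \<dots> (?L x)"
      proof (rule csum_le)
        fix n
        have s: "lps f y (?e n)" using re by auto
        let ?g = "take k (f x) @ map (\<lambda>gm. take j (f x ! k) @ gm @ drop (Suc j) (f x ! k)) (?e n) @ drop (Suc k) (f x)"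
        have "?g \<in> subst (f x) y (?e n)" unfolding subst_def using k j by blast
        then have "lps f x ?g" by (rule lps_step[OF s])
        then have "peval b ?g \<in> peval b ` {g. lps f x g}" by blast
        then have "nle (peval b ?g) (?L x)" by (rule lub_ge[OF linc_lub])
        moreover have "nle (?P * peval b (?e n) * ?Q) (peval b ?g)"
          unfolding peval_subst_elem by (rule nle_trans[OF nle_add2 nle_add1])
        ultimately show "nle (?P * peval b (?e n) * ?Q) (?L x)" using nle_trans by blast
      qed
      finally show "nle (1 * ?P * ?L y * ?Q) (?L x)" by simp
    qed
    then show ?thesis by simp
  qed
  then show ?thesis unfolding Dp_sys dpoly_def
    by (auto simp: nle_sum_iff nle_sum_list_iff in_set_conv_nth)
qed

lemma Dpow_le_linc: "nle (Dpow (sys f a) b i x b) (linc (f::'x::finite \<Rightarrow> _) x (b::'x \<Rightarrow> 'a))"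
proof (induction i arbitrary: x)
  case 0
  have "lps f x [[V x]]" by (rule lps_id)
  then have "peval b [[V x]] \<in> peval b ` {g. lps f x g}" by blast
  then have "nle (peval b [[V x]]) (linc f x b)" by (rule lub_ge[OF linc_lub])
  then show ?case by simp
next
  case (Suc i)
  have "Dpow (sys f a) b (Suc i) x b = Dp (sys f a) b x (\<lambda>y. Dpow (sys f a) b i y b)"
    by (simp add: vcomp_def)
  also have "nle \<dots> (Dp (sys f a) b x (\<lambda>y. linc f y b))"
    by (rule Dp_mono) (use Suc in \<open>auto simp: vle_def\<close>)
  also have "nle \<dots> (linc f x b)" by (rule Dp_linc_le)
  finally show ?case .
qed

lemma linc_eq:
  assumes H: "\<forall>x. \<forall>m \<in> set (f x). \<exists>z. V z \<in> set m"
  shows "linc (f::'x::finite \<Rightarrow> _) x (b::'x \<Rightarrow> 'a) = Dstar (sys f a) b x b"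
proof (rule antisym)
  show "nle (linc f x b) (Dstar (sys f a) b x b)"
    by (rule lub_le[OF linc_lub]) (auto intro: lps_le_Dstar[OF H])
  show "nle (Dstar (sys f a) b x b) (linc f x b)"
    unfolding Dstar_def by (rule csum_le) (rule Dpow_le_linc)
qed

end



definition Nw :: "('x::finite \<Rightarrow> ('a::{semiring_0,monoid_mult},'x) poly) \<Rightarrow> ('x \<Rightarrow> 'a) \<Rightarrow> 'x \<Rightarrow> 'a" where
  "Nw p v = (\<lambda>x. Dstar p v x v)"

lemma le_two_pow: "(k::nat) \<le> 2 ^ k"
proof (induction k)
  case 0 then show ?case by simp
next
  case (Suc k)
  have "1 \<le> (2::nat) ^ k" by simp
  then have "Suc k \<le> 2 ^ k + 2 ^ k" using Suc.IH by linarith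
  then show ?case by simp
qed

context ios begin

declare nle_trans[trans]

lemma vle_refl[simp]: "vle (v::_\<Rightarrow>'a) v" by (simp add: vle_def)
lemma vle_trans: "vle (u::_\<Rightarrow>'a) v \<Longrightarrow> vle v w \<Longrightarrow> vle u w"
  unfolding vle_def using nle_trans by blast

declare vle_trans[trans]

lemma Mseq_eq:
  assumes H: "\<forall>x. \<forall>m \<in> set (f x). \<exists>z. V z \<in> set m"
  shows "Mseq f n x (v::_\<Rightarrow>'a) = ((Nw (sys f a)) ^^ (2^n)) v x"
proof (induction n arbitrary: x v)
  case 0 then show ?case by (simp add: linc_eq[OF H] Nw_def)
next
  case (Suc n)
  have "Mseq f (Suc n) x v = Mseq f n x (\<lambda>y. Mseq f n y v)" by (simp add: vcomp_def)
  also have "\<dots> = ((Nw (sys f a)) ^^ (2^n)) ((Nw (sys f a) ^^ (2^n)) v) x"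
    using Suc by (simp add: fun_eq_iff[symmetric])
  also have "\<dots> = ((Nw (sys f a)) ^^ (2^n + 2^n)) v x" by (simp add: funpow_add)
  finally show ?case by (simp add: mult_2)
qed

lemma newton_eq:
  assumes H: "\<forall>x. \<forall>m \<in> set (f x). \<exists>z. V z \<in> set m"
  shows "newton (sys f a) k = ((Nw (sys f a)) ^^ k) (a::_\<Rightarrow>'a)"
proof (induction k)
  case 0
  have "peval (\<lambda>_. 0) (f x) = (0::'a)" for x using H by (simp add: peval_zero)
  then show ?case by (simp add: peval_sys fun_eq_iff)
next
  case (Suc k) then show ?case by (simp add: Nw_def)
qed

lemma Nw_mono: "vle v w \<Longrightarrow> vle (Nw p v) (Nw p (w::_\<Rightarrow>'a))"
  unfolding Nw_def by (subst vle_def) (auto intro!: Dstar_mono simp: vle_def)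

lemma Nw_infl: "vle v (Nw p (v::_\<Rightarrow>'a))"
  unfolding vle_def Nw_def
proof
  fix x show "nle (v x) (Dstar p v x v)" using Dstar_ge[of p v 0 x v] by simp
qed

lemma Nw_iter_infl: "m \<le> n \<Longrightarrow> vle ((Nw p ^^ m) b) ((Nw p ^^ n) (b::_\<Rightarrow>'a))"
proof (induction rule: dec_induct)
  case base then show ?case by simp
next
  case (step n) then show ?case using Nw_infl vle_trans by fastforce
qed

lemma Nw_ge_P:
  assumes H: "\<forall>x. \<forall>m \<in> set (f x). \<exists>z. V z \<in> set m" and av: "vle a v"
  shows "vle (\<lambda>x. peval v (sys f a x)) (Nw (sys f a) (v::_\<Rightarrow>'a))"
  unfolding vle_def peval_sys
proof
  fix x
  have "nle (peval v (f x)) (Dp (sys f a) v x v)" using H by (simp add: Dp_self_ge)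
  also have "Dp (sys f a) v x v = Dpow (sys f a) v (Suc 0) x v" by (simp add: vcomp_def)
  also have "nle \<dots> (Nw (sys f a) v x)" unfolding Nw_def by (rule Dstar_ge)
  finally have 1: "nle (peval v (f x)) (Nw (sys f a) v x)" .
  have 2: "nle (a x) (Nw (sys f a) v x)" using av Nw_infl[of v "sys f a"] unfolding vle_def
    using nle_trans by blast
  show "nle (peval v (f x) + a x) (Nw (sys f a) v x)" using 1 2 by (simp add: nle_add_iff)
qed

lemma Nw_sol:
  assumes sol: "is_solution (sys f a) (mu::_\<Rightarrow>'a)"
  shows "vle (Nw (sys f a) mu) mu"
proof -
  have "nle (Dpow (sys f a) mu i x mu) (mu x)" for i x
  proof (induction i arbitrary: x)
    case 0 then show ?case by simp
  next
    case (Suc i)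
    have "Dpow (sys f a) mu (Suc i) x mu = Dp (sys f a) mu x (\<lambda>y. Dpow (sys f a) mu i y mu)"
      by (simp add: vcomp_def)
    also have "nle \<dots> (Dp (sys f a) mu x mu)"
      by (rule Dp_mono) (use Suc in auto)
    also have "nle \<dots> (peval mu (f x))" by (rule Dp_self_le)
    also have "nle \<dots> (peval mu (sys f a x))" unfolding peval_sys by simp
    also have "\<dots> = mu x" using sol unfolding is_solution_def by simp
    finally show ?case .
  qed
  then show ?thesis unfolding vle_def Nw_def Dstar_def by (auto intro: csum_le)
qed

lemma lub_sing[simp]: "is_nlub (c::'a) {c}"
  unfolding is_nlub_def by auto
lemma lub_const: "is_nlub (c::'a) (range (\<lambda>k. c))"
  by simp

lemma cont_meval:
  assumes ch: "\<And>k. vle (c k) (c (Suc k))" and w: "\<And>x. is_nlub (w x) (range (\<lambda>k. c k x))"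
  shows "is_nlub (meval w m) (range (\<lambda>k. meval (c k) m :: 'a))"
proof (induction m)
  case Nil then show ?case by (simp add: lub_const)
next
  case (Cons l m)
  have 1: "is_nlub (leval w l) (range (\<lambda>k. leval (c k) l))"
    by (cases l) (auto simp: lub_const w)
  show ?case unfolding meval_Cons
    by (rule lub_prod[OF _ _ 1 Cons]) (auto intro: leval_mono meval_mono ch)
qed

lemma cont_peval:
  assumes ch: "\<And>k. vle (c k) (c (Suc k))" and w: "\<And>x. is_nlub (w x) (range (\<lambda>k. c k x))"
  shows "is_nlub (peval w h) (range (\<lambda>k. peval (c k) h :: 'a))"
proof (induction h)
  case Nil then show ?case by (simp add: lub_const)
next
  case (Cons m h)
  show ?case unfolding peval_Cons
    by (rule lub_add[OF cont_meval[OF ch w] Cons])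
qed

lemma lub_shift:
  assumes ch: "\<And>k. nle (c k) (c (Suc k))" and s: "is_nlub s (range (\<lambda>k. c (Suc k)))"
  shows "is_nlub (s::'a) (range c)"
  unfolding is_nlub_def
proof (intro conjI ballI allI impI)
  fix y assume "y \<in> range c"
  then obtain k where y: "y = c k" by blast
  have "nle (c k) (c (Suc k))" by (rule ch)
  also have "nle (c (Suc k)) s" using s by (auto intro: lub_ge)
  finally show "nle y s" using y by simp
next
  fix t assume "\<forall>y\<in>range c. nle y t"
  then show "nle s t" using s by (auto intro: lub_le)
qed

lemma main2:
  fixes f :: "'x::finite \<Rightarrow> ('a, 'x) poly"
  assumes H: "\<forall>x. \<forall>m \<in> set (f x). \<exists>z. V z \<in> set m"
    and ls: "least_solution (sys f a) (mu::_\<Rightarrow>'a)" and ab: "vle a b" and bm: "vle b mu"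
  shows "vis_lub mu (range (\<lambda>n. \<lambda>x. Mseq f n x b))"
proof -
  let ?N = "Nw (sys f a)"
  let ?P = "\<lambda>v x. peval v (sys f a x)"
  have sol: "is_solution (sys f a) mu" using ls unfolding least_solution_def by simp
  have Pmono: "vle v w \<Longrightarrow> vle (?P v) (?P w)" for v w by (auto simp: vle_def intro: peval_mono)
  have up: "vle ((?N ^^ k) b) mu" for k
  proof (induction k)
    case 0 then show ?case using bm by simp
  next
    case (Suc k)
    then have "vle (?N ((?N ^^ k) b)) (?N mu)" by (simp add: Nw_mono)
    then show ?case using Nw_sol[OF sol] vle_trans by fastforce
  qed
  define K where "K k = (?P ^^ k) (\<lambda>_. 0)" for k
  have Kch: "vle (K k) (K (Suc k))" for k
  proof (induction k)
    case 0 then show ?case by (simp add: K_def vle_def)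
  next
    case (Suc k) then show ?case unfolding K_def using Pmono by simp
  qed
  have Kle: "vle (K k) ((?N ^^ k) b)" for k
  proof (induction k)
    case 0 then show ?case by (simp add: K_def vle_def)
  next
    case (Suc k)
    have "vle a ((?N ^^ k) b)" using ab Nw_iter_infl[of 0 k "sys f a" b] vle_trans by fastforce
    then have "vle (?P ((?N ^^ k) b)) (?N ((?N ^^ k) b))" by (rule Nw_ge_P[OF H])
    moreover have "vle (?P (K k)) (?P ((?N ^^ k) b))" using Suc Pmono by simp
    ultimately show ?case unfolding K_def using vle_trans by fastforce
  qed
  define Kl where "Kl x = csum (\<lambda>k. K k x)" for x
  have Kl: "is_nlub (Kl x) (range (\<lambda>k. K k x))" for x unfolding Kl_def by (rule csum_lub)
  have Ksol: "is_solution (sys f a) Kl"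
    unfolding is_solution_def
  proof
    fix x
    have "is_nlub (peval Kl (sys f a x)) (range (\<lambda>k. peval (K k) (sys f a x)))"
      by (rule cont_peval[OF Kch Kl])
    then have "is_nlub (peval Kl (sys f a x)) (range (\<lambda>k. K (Suc k) x))"
      by (simp add: K_def)
    then have "is_nlub (peval Kl (sys f a x)) (range (\<lambda>k. K k x))"
      by (rule lub_shift[rotated]) (use Kch in \<open>auto simp: vle_def\<close>)
    then show "Kl x = peval Kl (sys f a x)" using Kl lub_unique by blast
  qed
  have muKl: "vle mu Kl" using ls Ksol unfolding least_solution_def by blast
  have eqM: "(\<lambda>x. Mseq f n x b) = (?N ^^ (2^n)) b" for n
    by (rule ext) (rule Mseq_eq[OF H])
  show ?thesis unfolding vis_lub_def eqM
  proof (intro conjI ballI allI impI)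
    fix u assume "u \<in> range (\<lambda>n. (?N ^^ (2^n)) b)"
    then show "vle u mu" using up by auto
  next
    fix t assume t: "\<forall>u\<in>range (\<lambda>n. (?N ^^ (2^n)) b). vle u t"
    have "nle (Kl x) (t x)" for x
      unfolding Kl_def
    proof (rule csum_le)
      fix k
      have "vle (K k) ((?N ^^ k) b)" by (rule Kle)
      also have "vle \<dots> ((?N ^^ (2^k)) b)" by (rule Nw_iter_infl[OF le_two_pow])
      also have "vle \<dots> t" using t by auto
      finally show "nle (K k x) (t x)" unfolding vle_def by simp
    qed
    then show "vle mu t" using muKl unfolding vle_def using nle_trans by blast
  qed
qed

end




theorem theorem9:
  fixes f :: "'x::finite \<Rightarrow> ('a::{semiring_0,monoid_mult}, 'x) poly"
    and a :: "'x \<Rightarrow> 'a"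
  assumes S: "idem_omega_semiring TYPE('a)"
    and "\<forall>x. \<forall>m \<in> set (f x). \<exists>z. V z \<in> set m"
  shows "(\<forall>n. (\<lambda>x. Mseq f n x a) = newton (sys f a) (2 ^ n))
       \<and> (\<forall>mu b. least_solution (sys f a) mu \<and> vle a b \<and> vle b mu
              \<longrightarrow> vis_lub mu (range (\<lambda>n. \<lambda>x. Mseq f n x b)))"
proof -
  note H = assms(2)
  interpret ios "TYPE('a)" by (rule ios.intro) (rule S)
  have 1: "\<forall>n. (\<lambda>x. Mseq f n x a) = newton (sys f a) (2 ^ n)"
    by (simp add: fun_eq_iff Mseq_eq[OF H] newton_eq[OF H])
  have 2: "\<forall>mu b. least_solution (sys f a) mu \<and> vle a b \<and> vle b mu
              \<longrightarrow> vis_lub mu (range (\<lambda>n. \<lambda>x. Mseq f n x b))"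
    using main2[OF H] by blast
  show ?thesis using 1 2 by blast
qed

end
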